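(* The knowledge state algorithm $K_2$ for the $2$-cache problem is $\tfrac32$-competitive: there is a constant $K$ such that $E(\mathrm{cost}_{K_2}(\varrho))\le\tfrac32\,\mathrm{cost}_{\mathrm{opt}}(\varrho)+K$ for every finite request sequence $\varrho$.
   Context: The $k$-cache problem: there is an infinite set $P$ of pages; the state set $\mathcal X$ is the set of $k$-element subsets of $P$ (cache contents), with a given initial cache $s^0$; the requests are the pages, $\mathcal R=P$; $d(x,y)=|x\setminus y|$; and $\mathrm{cost}(x,r,y)=2$ if $x=y$ and $r\notin x$; $\mathrm{cost}(x,r,y)=d(x,y)$ if $r\in x$ or $r\in y$; $\mathrm{cost}(x,r,y)=d(x,y)+1$ otherwise. For $\varrho=r^1\dots r^n$, $\mathrm{cost}_{\mathrm{opt}}(\varrho)$ is the minimum of $\sum_t\mathrm{cost}(x^{t-1},r^t,x^t)$ over $x^1,\dots,x^n\in\mathcal X$ with $x^0=s^0$. $\Pi$ is the set of finitely supported probability distributions on $\mathcal X$; for $\pi,\pi'\in\Pi$, $\mathrm{cost}(\pi,r,\pi')$ is the minimum of $\sum_{x,y}\gamma(x,y)\mathrm{cost}(x,r,y)$ over distributions $\gamma$ on $\mathrm{supp}(\pi)\times\mathrm{supp}(\pi')$ with marginals $\pi,\pi'$. Bar notation: a string $\alpha$ of distinct page names and exactly $k$ bars, with at least $i$ page names to the left of the $i$-th bar, denotes the estimator $\omega_\alpha(y)=\min_{x\in S_\alpha}d(x,y)$, where $S_\alpha$ is the set of configurations $x$ such that for each $i=1,\dots,k$ at least $i$ elements of $x$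 are written to the left of the $i$-th bar. Algorithm $K_2$ ($k=2$; $a,b,c,d$ always denote distinct pages). It is a randomized algorithm whose state is a pair (distribution, estimator). States: $A^{a,b}=(\{a,b\},\ ab||)$ (point mass on $\{a,b\}$; $A^{a,b}=A^{b,a}$), and $B^{a,b,c}=(\tfrac12\{a,b\}+\tfrac12\{a,c\},\ a|bc|)$ ($B^{a,b,c}=B^{a,c,b}$). Initial state $A^{a,b}$ where $s^0=\{a,b\}$. Transitions: from $A^{a,b}$: request $a$ or $b$: stay; request $c\notin\{a,b\}$: go to $B^{c,a,b}$. From $B^{a,b,c}$: request $a$: stay; request $b$: go to $A^{b,a}$; request $c$: go to $A^{c,a}$; request $d\notin\{a,b,c\}$: go to each of $A^{d,a},A^{d,b},A^{d,c}$ with probability $\tfrac13$. The cost of a step from state $(\pi,\omega)$ on request $r$, whose successor states $(\pi_i,\omega_i)$ have probabilities $\lambda_i$, is $\mathrm{cost}(\pi,r,\sum_i\lambda_i\pi_i)$; $\mathrm{cost}_{K_2}(\varrho)$ is the (random) sum of step costs. *)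

theory Defs
  imports "HOL-Probability.Probability"
begin

text \<open>The 2-cache problem. Pages are elements of a type 'p (assumed infinite in the
theorem); configurations are 2-element sets of pages.\<close>

definition dist_conf :: "'p set \<Rightarrow> 'p set \<Rightarrow> nat" where
  "dist_conf x y = card (x - y)"

definition ccost :: "'p set \<Rightarrow> 'p \<Rightarrow> 'p set \<Rightarrow> nat" where
  "ccost x r y =
     (if x = y \<and> r \<notin> x then 2
      else if r \<in> x \<or> r \<in> y then dist_conf x y
      else dist_conf x y + 1)"

definition cost_opt :: "'p set \<Rightarrow> 'p list \<Rightarrow> nat" where
  "cost_opt s0 \<rho> = Inf {(\<Sum>t<length \<rho>. ccost (xs t) (\<rho> ! t) (xs (Suc t))) | xs.
        xs 0 = s0 \<and> (\<forall>t\<in>{1..length \<rho>}. card (xs t) = 2)}"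

definition tcost :: "'p set pmf \<Rightarrow> 'p \<Rightarrow> 'p set pmf \<Rightarrow> real" where
  "tcost \<pi> r \<pi>' = Inf {measure_pmf.expectation \<gamma> (\<lambda>(x, y). real (ccost x r y)) | \<gamma>.
        map_pmf fst \<gamma> = \<pi> \<and> map_pmf snd \<gamma> = \<pi>'}"

text \<open>States of K_2: KA {a,b} is A^{a,b}; KB a {b,c} is B^{a,b,c}.
The estimator component is determined by these parameters and does not affect costs.\<close>
datatype 'p kstate = KA "'p set" | KB 'p "'p set"

fun kdistr :: "'p kstate \<Rightarrow> 'p set pmf" where
  "kdistr (KA x) = return_pmf x"
| "kdistr (KB a y) = pmf_of_set ((\<lambda>z. {a, z}) ` y)"

fun ktrans :: "'p kstate \<Rightarrow> 'p \<Rightarrow> 'p kstate pmf" where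
  "ktrans (KA x) r = (if r \<in> x then return_pmf (KA x) else return_pmf (KB r x))"
| "ktrans (KB a y) r =
     (if r = a then return_pmf (KB a y)
      else if r \<in> y then return_pmf (KA {r, a})
      else pmf_of_set ((\<lambda>z. KA {r, z}) ` insert a y))"

definition kstep_cost :: "'p kstate \<Rightarrow> 'p \<Rightarrow> real" where
  "kstep_cost s r = tcost (kdistr s) r (bind_pmf (ktrans s r) kdistr)"

fun kexp_cost :: "'p kstate pmf \<Rightarrow> 'p list \<Rightarrow> real" where
  "kexp_cost D [] = 0"
| "kexp_cost D (r # rs) =
     measure_pmf.expectation D (\<lambda>s. kstep_cost s r)
     + kexp_cost (bind_pmf D (\<lambda>s. ktrans s r)) rs"

end

theory Submission
  imports Defs
begin

lemma tcost_le:
  assumes "map_pmf fst \<gamma> = \<pi>" "map_pmf snd \<gamma> = \<pi>'"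
  shows "tcost \<pi> r \<pi>' \<le> measure_pmf.expectation \<gamma> (\<lambda>(x, y). real (ccost x r y))"
  unfolding tcost_def
proof (rule cInf_lower)
  show "measure_pmf.expectation \<gamma> (\<lambda>(x, y). real (ccost x r y)) \<in> {measure_pmf.expectation \<gamma> (\<lambda>(x, y). real (ccost x r y)) | \<gamma>.
        map_pmf fst \<gamma> = \<pi> \<and> map_pmf snd \<gamma> = \<pi>'}" using assms by blast
  show "bdd_below {measure_pmf.expectation \<gamma> (\<lambda>(x, y). real (ccost x r y)) | \<gamma>.
        map_pmf fst \<gamma> = \<pi> \<and> map_pmf snd \<gamma> = \<pi>'}"
    by (rule bdd_belowI[where m=0]) (auto intro!: integral_nonneg simp: split_beta)
qed

lemma exp_mono_fin:
  fixes f g :: "'a \<Rightarrow> real"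
  assumes "finite (set_pmf p)" "\<And>x. x \<in> set_pmf p \<Longrightarrow> f x \<le> g x"
  shows "measure_pmf.expectation p f \<le> measure_pmf.expectation p g"
  by (rule integral_mono_AE) (auto simp: AE_measure_pmf_iff assms integrable_measure_pmf_finite)

lemma exp_le_const:
  fixes f :: "'a \<Rightarrow> real"
  assumes "finite (set_pmf p)" "\<And>x. x \<in> set_pmf p \<Longrightarrow> f x \<le> c"
  shows "measure_pmf.expectation p f \<le> c"
proof -
  have "measure_pmf.expectation p f \<le> measure_pmf.expectation p (\<lambda>_. c)"
    by (rule exp_mono_fin) (use assms in auto)
  also have "\<dots> = c" by simp
  finally show ?thesis .
qed

lemma integral_bind_fin:
  fixes g :: "'b \<Rightarrow> real"
  assumes D: "finite (set_pmf D)" and K: "\<And>s. s \<in> set_pmf D \<Longrightarrow> finite (set_pmf (K s))"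
    and g: "\<And>y. 0 \<le> g y"
  shows "measure_pmf.expectation (bind_pmf D K) g = measure_pmf.expectation D (\<lambda>s. measure_pmf.expectation (K s) g)"
proof -
  have fin: "finite (set_pmf (bind_pmf D K))" using D K by (auto simp: set_bind_pmf)
  have "ennreal (measure_pmf.expectation (bind_pmf D K) g) = (\<integral>\<^sup>+x. ennreal (g x) \<partial>bind_pmf D K)"
    by (rule nn_integral_eq_integral[symmetric]) (auto simp: g intro: integrable_measure_pmf_finite[OF fin])
  also have "\<dots> = (\<integral>\<^sup>+s. \<integral>\<^sup>+y. ennreal (g y) \<partial>K s \<partial>D)" by simp
  also have "\<dots> = (\<integral>\<^sup>+s. ennreal (measure_pmf.expectation (K s) g) \<partial>D)"
    by (rule nn_integral_cong_AE)
      (auto simp: AE_measure_pmf_iff K integrable_measure_pmf_finite g intro!: nn_integral_eq_integral)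
  also have "\<dots> = ennreal (measure_pmf.expectation D (\<lambda>s. measure_pmf.expectation (K s) g))"
    by (rule nn_integral_eq_integral) (auto simp: D integrable_measure_pmf_finite g intro!: integral_nonneg)
  finally show ?thesis
    by (subst (asm) ennreal_inj) (auto intro!: integral_nonneg simp: g)
qed

fun valid :: "'p kstate \<Rightarrow> bool" where
  "valid (KA X) = (card X = 2)"
| "valid (KB a Y) = (card Y = 2 \<and> a \<notin> Y)"

fun kphi :: "'p kstate \<Rightarrow> 'p set \<Rightarrow> real" where
  "kphi (KA X) x = 3/2 * real (card (X - x))"
| "kphi (KB a Y) x = (if a \<in> x \<and> x \<subseteq> insert a Y then 1/2
      else if x \<inter> insert a Y = {} then 5/2 else 2)"

lemma kphi_nonneg: "0 \<le> kphi s x"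
  by (cases s) auto

lemma ccost_ge_dist: "dist_conf x y \<le> ccost x r y"
  by (auto simp: ccost_def dist_conf_def)

lemma decomp:
  assumes x: "card x = 2" and y: "card y = 2"
  shows "\<exists>z. card z = 2 \<and> r \<in> z \<and> dist_conf x z + dist_conf z y \<le> ccost x r y"
proof (cases "r \<in> x")
  case True
  then show ?thesis using x by (intro exI[of _ x]) (auto simp: ccost_def dist_conf_def)
next
  case rx: False
  show ?thesis
  proof (cases "r \<in> y")
    case True
    then show ?thesis using y by (intro exI[of _ y]) (auto simp: ccost_def dist_conf_def)
  next
    case ry: False
    have fx: "finite x" using x by (metis card.infinite zero_neq_numeral)
    have fy: "finite y" using y by (metis card.infinite zero_neq_numeral)
    obtain u where u: "u \<in> x" "x \<noteq> y \<longrightarrow> u \<notin> y"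
    proof (cases "x = y")
      case True
      then show ?thesis using x that by (metis card.empty ex_in_conv zero_neq_numeral)
    next
      case False
      then have "\<not> x \<subseteq> y" using x y fy by (metis card_subset_eq)
      then show ?thesis using that by blast
    qed
    define z where "z = insert r (x - {u})"
    have cz: "card z = 2" unfolding z_def using fx x u rx by (simp add: card_insert_if)
    have d1: "dist_conf x z = 1"
    proof -
      have "x - z = {u}" unfolding z_def using u rx by auto
      then show ?thesis by (simp add: dist_conf_def)
    qed
    have d2: "dist_conf z y \<le> (if x = y then 1 else dist_conf x y)"
    proof -
      have "z - y = insert r ((x - {u}) - y)" unfolding z_def using ry by auto
      then have "card (z - y) = Suc (card ((x - {u}) - y))" using fx rx by (simp add: card_insert_if)
      moreover have "x = y \<Longrightarrow> card ((x - {u}) - y) = 0"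
      proof -
        assume "x = y"
        then have "(x - {u}) - y = {}" by auto
        then show ?thesis by (metis card.empty)
      qed
      moreover have "x \<noteq> y \<Longrightarrow> Suc (card ((x - {u}) - y)) = card (x - y)"
      proof -
        assume "x \<noteq> y"
        then have "x - y = insert u ((x - {u}) - y)" using u by auto
        then show ?thesis using fx by (simp add: card_insert_if)
      qed
      ultimately show ?thesis by (auto simp: dist_conf_def)
    qed
    have "ccost x r y = (if x = y then 2 else dist_conf x y + 1)"
      using rx ry by (auto simp: ccost_def)
    then show ?thesis using cz d1 d2 by (intro exI[of _ z]) (auto simp: z_def split: if_splits)
  qed
qed

lemma two_fin: "card x = 2 \<Longrightarrow> finite x"
  by (metis card.infinite zero_neq_numeral)

lemma kphi_lip:
  assumes v: "valid s" and z: "card z = 2" and y: "card y = 2"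
  shows "kphi s y \<le> kphi s z + 3/2 * dist_conf z y"
proof (cases s)
  case (KA X)
  have fX: "finite X" using v KA two_fin by auto
  have fz: "finite z" using z two_fin by auto
  have "X - y \<subseteq> (X - z) \<union> (z - y)" by auto
  then have "card (X - y) \<le> card ((X - z) \<union> (z - y))" using fX fz by (intro card_mono) auto
  also have "\<dots> \<le> card (X - z) + card (z - y)" by (rule card_Un_le)
  finally show ?thesis using KA by (simp add: dist_conf_def)
next
  case (KB a Y)
  have fz: "finite z" using z two_fin by auto
  have fy: "finite y" using y two_fin by auto
  show ?thesis
  proof (cases "dist_conf z y = 0")
    case True
    then have "z \<subseteq> y" using fz by (auto simp: dist_conf_def)
    then have "z = y" using z y fy by (metis card_subset_eq)
    then show ?thesis by simp
  next
    case nz: False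
    show ?thesis
    proof (cases "a \<in> z \<and> z \<subseteq> insert a Y \<and> y \<inter> insert a Y = {}")
      case True
      then have "z - y = z" by auto
      then have "dist_conf z y = 2" using z by (simp add: dist_conf_def)
      then show ?thesis using KB by auto
    next
      case False
      then have "kphi s y \<le> kphi s z + 3/2" using KB by auto
      moreover have "1 \<le> real (dist_conf z y)" using nz by simp
      ultimately show ?thesis by linarith
    qed
  qed
qed

lemma kcost_A_in: "r \<in> X \<Longrightarrow> kstep_cost (KA X) r \<le> 0"
proof -
  assume r: "r \<in> X"
  have "kstep_cost (KA X) r = tcost (return_pmf X) r (return_pmf X)"
    using r by (simp add: kstep_cost_def bind_return_pmf)
  also have "\<dots> \<le> measure_pmf.expectation (return_pmf (X, X)) (\<lambda>(x, y). real (ccost x r y))"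
    by (rule tcost_le) auto
  also have "\<dots> \<le> 0"
    by (rule exp_le_const) (use r in \<open>auto simp: ccost_def dist_conf_def\<close>)
  finally show ?thesis .
qed

lemma kcost_A_out: "card X = 2 \<Longrightarrow> r \<notin> X \<Longrightarrow> kstep_cost (KA X) r \<le> 1"
proof -
  assume X: "card X = 2" and r: "r \<notin> X"
  obtain a b where ab: "X = {a, b}" "a \<noteq> b" using X card_2_iff by metis
  have inj: "inj_on (\<lambda>z. {r, z}) X" using r by (auto simp: inj_on_def doubleton_eq_iff)
  have eq: "map_pmf (\<lambda>z. {r, z}) (pmf_of_set X) = pmf_of_set ((\<lambda>z. {r, z}) ` X)"
    by (rule map_pmf_of_set_inj[OF inj]) (use X two_fin in auto)
  have "kstep_cost (KA X) r = tcost (return_pmf X) r (pmf_of_set ((\<lambda>z. {r, z}) ` X))"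
    using r by (simp add: kstep_cost_def bind_return_pmf)
  also have "\<dots> \<le> measure_pmf.expectation (map_pmf (\<lambda>z. (X, {r, z})) (pmf_of_set X)) (\<lambda>(x, y). real (ccost x r y))"
    by (rule tcost_le) (auto simp: map_pmf_comp eq)
  also have "\<dots> \<le> 1"
    by (rule exp_le_const) (use r ab in \<open>auto simp: ccost_def dist_conf_def insert_Diff_if\<close>)
  finally show ?thesis .
qed

lemma kcost_B_a: "card Y = 2 \<Longrightarrow> a \<notin> Y \<Longrightarrow> kstep_cost (KB a Y) a \<le> 0"
proof -
  assume Y: "card Y = 2" and a: "a \<notin> Y"
  have fY: "finite Y" "Y \<noteq> {}" using Y two_fin by auto
  have "kstep_cost (KB a Y) a = tcost (kdistr (KB a Y)) a (kdistr (KB a Y))"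
    by (simp add: kstep_cost_def bind_return_pmf)
  also have "\<dots> \<le> measure_pmf.expectation (map_pmf (\<lambda>w. (w, w)) (kdistr (KB a Y))) (\<lambda>(x, y). real (ccost x a y))"
    by (rule tcost_le) (auto simp: map_pmf_comp)
  also have "\<dots> \<le> 0"
    by (rule exp_le_const) (use fY in \<open>auto simp: ccost_def dist_conf_def\<close>)
  finally show ?thesis .
qed

lemma kcost_B_y: "card Y = 2 \<Longrightarrow> a \<notin> Y \<Longrightarrow> r \<in> Y \<Longrightarrow> kstep_cost (KB a Y) r \<le> 1/2"
proof -
  assume Y: "card Y = 2" and a: "a \<notin> Y" and r: "r \<in> Y"
  obtain c where Yc: "Y = {r, c}" "r \<noteq> c" using Y r card_2_iff
    by (metis doubleton_eq_iff insertE singletonD)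
  have ra: "r \<noteq> a" "c \<noteq> a" using a Yc by auto
  have "kstep_cost (KB a Y) r = tcost (kdistr (KB a Y)) r (return_pmf {r, a})"
    using r ra by (simp add: kstep_cost_def bind_return_pmf)
  also have "\<dots> \<le> measure_pmf.expectation (map_pmf (\<lambda>w. (w, {r, a})) (kdistr (KB a Y))) (\<lambda>(x, y). real (ccost x r y))"
    by (rule tcost_le) (auto simp: map_pmf_comp)
  also have "\<dots> = 1/2"
    using Yc ra by (simp add: integral_pmf_of_set ccost_def dist_conf_def insert_Diff_if doubleton_eq_iff card_insert_if)
  finally show ?thesis .
qed

lemma ktrans_B_new:
  assumes Y: "card Y = 2" and r: "r \<notin> insert a Y"
  shows "ktrans (KB a Y) r = map_pmf (\<lambda>z. KA {r, z}) (pmf_of_set (insert a Y))"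
proof -
  have inj: "inj_on (\<lambda>z. KA {r, z}) (insert a Y)" using r by (auto simp: inj_on_def doubleton_eq_iff)
  show ?thesis using r
    by (simp add: map_pmf_of_set_inj[OF inj] two_fin[OF Y])
qed

lemma kcost_B_new:
  assumes Y: "card Y = 2" and a: "a \<notin> Y" and r: "r \<notin> insert a Y"
  shows "kstep_cost (KB a Y) r \<le> 1"
proof -
  obtain b c where Yb: "Y = {b, c}" "b \<noteq> c" using Y card_2_iff by metis
  have fY: "finite Y" "Y \<noteq> {}" using Y two_fin by auto
  define P where "P = pmf_of_set (insert a Y)"
  define Q where "Q = pmf_of_set Y"
  define G where "G z = (if z \<in> Y then return_pmf z else Q)" for z
  have T: "bind_pmf (ktrans (KB a Y) r) kdistr = map_pmf (\<lambda>z. {r, z}) P"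
  proof -
    have "bind_pmf (ktrans (KB a Y) r) kdistr = bind_pmf P (\<lambda>z. return_pmf {r, z})"
      unfolding ktrans_B_new[OF Y r] bind_map_pmf P_def by simp
    then show ?thesis by (simp add: map_pmf_def)
  qed
  have inner: "bind_pmf P G = Q"
  proof (rule pmf_eqI)
    fix w
    show "pmf (bind_pmf P G) w = pmf Q w"
      unfolding P_def using Yb a fY
      by (auto simp: pmf_bind_pmf_of_set G_def Q_def indicator_def)
  qed
  have injY: "inj_on (\<lambda>w. {a, w}) Y" using a by (auto simp: inj_on_def doubleton_eq_iff)
  define \<gamma> where "\<gamma> = bind_pmf P (\<lambda>z. map_pmf (\<lambda>w. ({a, w}, {r, z})) (G z))"
  have m1: "map_pmf fst \<gamma> = kdistr (KB a Y)"
  proof -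
    have "map_pmf fst \<gamma> = bind_pmf P (\<lambda>z. map_pmf (\<lambda>w. {a, w}) (G z))"
      by (simp add: \<gamma>_def map_bind_pmf map_pmf_comp)
    also have "\<dots> = map_pmf (\<lambda>w. {a, w}) (bind_pmf P G)"
      by (simp add: map_bind_pmf)
    also have "\<dots> = kdistr (KB a Y)"
      using inner by (simp add: Q_def map_pmf_of_set_inj[OF injY] fY)
    finally show ?thesis .
  qed
  have m2: "map_pmf snd \<gamma> = bind_pmf (ktrans (KB a Y) r) kdistr"
  proof -
    have "map_pmf snd \<gamma> = bind_pmf P (\<lambda>z. map_pmf (\<lambda>w. {r, z}) (G z))"
      by (simp add: \<gamma>_def map_bind_pmf map_pmf_comp)
    also have "\<dots> = bind_pmf P (\<lambda>z. return_pmf {r, z})" by simp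
    also have "\<dots> = map_pmf (\<lambda>z. {r, z}) P" by (rule map_pmf_def[symmetric])
    finally show ?thesis unfolding T .
  qed
  have "kstep_cost (KB a Y) r \<le> measure_pmf.expectation \<gamma> (\<lambda>(x, y). real (ccost x r y))"
    unfolding kstep_cost_def by (rule tcost_le[OF m1 m2])
  also have "\<dots> \<le> 1"
  proof (rule exp_le_const)
    show "finite (set_pmf \<gamma>)"
      using fY by (auto simp: \<gamma>_def P_def G_def Q_def set_bind_pmf)
    fix p assume "p \<in> set_pmf \<gamma>"
    then obtain z w where zw: "z \<in> insert a Y" "w \<in> set_pmf (G z)" "p = ({a, w}, {r, z})"
      using fY by (auto simp: \<gamma>_def P_def set_bind_pmf)
    then have "(z = a \<and> w \<in> Y) \<or> (z \<in> Y \<and> w = z)"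
      using fY by (auto simp: G_def Q_def split: if_splits)
    then show "(case p of (x, y) \<Rightarrow> real (ccost x r y)) \<le> 1"
      using zw(3) Yb a r by (auto simp: ccost_def dist_conf_def insert_Diff_if doubleton_eq_iff)
  qed
  finally show ?thesis .
qed

lemma ktrans_valid:
  assumes v: "valid s" and s': "s' \<in> set_pmf (ktrans s r)"
  shows "valid s'"
proof (cases s)
  case (KA X)
  then show ?thesis using v s' by (auto split: if_splits)
next
  case (KB a Y)
  have fY: "finite Y" using v KB two_fin by auto
  show ?thesis using v s' KB fY by (auto split: if_splits simp: card_insert_if)
qed

lemma ktrans_fin:
  assumes v: "valid s"
  shows "finite (set_pmf (ktrans s r))"
proof (cases s)
  case (KA X)
  then show ?thesis by auto
next
  case (KB a Y)
  have fY: "finite Y" using v KB two_fin by auto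
  show ?thesis using KB fY by auto
qed

lemma service:
  assumes v: "valid s" and x: "card x = 2" and rx: "r \<in> x"
  shows "kstep_cost s r + measure_pmf.expectation (ktrans s r) (\<lambda>s'. kphi s' x) \<le> kphi s x"
proof -
  obtain w where xw: "x = {r, w}" "w \<noteq> r" using x rx card_2_iff
    by (metis doubleton_eq_iff insertE singletonD)
  show ?thesis
  proof (cases s)
    case (KA X)
    obtain a b where ab: "X = {a, b}" "a \<noteq> b" using v KA card_2_iff by (metis valid.simps(1))
    show ?thesis
    proof (cases "r \<in> X")
      case True
      then show ?thesis using kcost_A_in[OF True] KA by simp
    next
      case False
      have c: "kstep_cost (KA X) r \<le> 1" using kcost_A_out False v KA by simp
      have "1 + kphi (KB r X) x \<le> kphi (KA X) x"
        using False ab xw by (cases "w = a"; cases "w = b") (auto simp: insert_Diff_if)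
      then show ?thesis using c KA False by simp
    qed
  next
    case (KB a Y)
    have Y: "card Y = 2" and aY: "a \<notin> Y" using v KB by auto
    obtain b c where bc: "Y = {b, c}" "b \<noteq> c" using Y card_2_iff by metis
    show ?thesis
    proof (cases "r = a")
      case True
      then show ?thesis using kcost_B_a[OF Y aY] KB by simp
    next
      case ra: False
      show ?thesis
      proof (cases "r \<in> Y")
        case True
        have co: "kstep_cost (KB a Y) r \<le> 1/2" using kcost_B_y[OF Y aY True] .
        have "1/2 + kphi (KA {r, a}) x \<le> kphi (KB a Y) x"
          using True ra aY bc xw by (cases "w = a"; cases "w = b"; cases "w = c") (auto simp: insert_Diff_if)
        then show ?thesis using co KB True ra by simp
      next
        case False
        have rn: "r \<notin> insert a Y" using False ra by simp
        have co: "kstep_cost (KB a Y) r \<le> 1" using kcost_B_new[OF Y aY rn] .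
        have E: "measure_pmf.expectation (ktrans (KB a Y) r) (\<lambda>s'. kphi s' x)
             = (\<Sum>z\<in>insert a Y. kphi (KA {r, z}) x) / 3"
          unfolding ktrans_B_new[OF Y rn] using bc aY
          by (simp add: integral_pmf_of_set card_insert_if)
        have "1 + (\<Sum>z\<in>insert a Y. kphi (KA {r, z}) x) / 3 \<le> kphi (KB a Y) x"
          using rn aY bc xw by (cases "w = a"; cases "w = b"; cases "w = c") (auto simp: insert_Diff_if)
        then show ?thesis using co KB E by simp
      qed
    qed
  qed
qed

lemma amortized:
  assumes v: "valid s" and x: "card x = 2" and y: "card y = 2"
  shows "kstep_cost s r + measure_pmf.expectation (ktrans s r) (\<lambda>s'. kphi s' y)
         \<le> kphi s x + 3/2 * real (ccost x r y)"
proof -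
  obtain z where z: "card z = 2" "r \<in> z" "dist_conf x z + dist_conf z y \<le> ccost x r y"
    using decomp[OF x y] by blast
  have fin: "finite (set_pmf (ktrans s r))" by (rule ktrans_fin[OF v])
  have "measure_pmf.expectation (ktrans s r) (\<lambda>s'. kphi s' y)
       \<le> measure_pmf.expectation (ktrans s r) (\<lambda>s'. kphi s' z + 3/2 * real (dist_conf z y))"
    by (rule exp_mono_fin[OF fin]) (rule kphi_lip[OF ktrans_valid[OF v] z(1) y])
  also have "\<dots> = measure_pmf.expectation (ktrans s r) (\<lambda>s'. kphi s' z) + 3/2 * real (dist_conf z y)"
    by (subst Bochner_Integration.integral_add) (auto intro: integrable_measure_pmf_finite[OF fin])
  finally have E: "measure_pmf.expectation (ktrans s r) (\<lambda>s'. kphi s' y)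
       \<le> measure_pmf.expectation (ktrans s r) (\<lambda>s'. kphi s' z) + 3/2 * real (dist_conf z y)" .
  have S: "kstep_cost s r + measure_pmf.expectation (ktrans s r) (\<lambda>s'. kphi s' z) \<le> kphi s z"
    by (rule service[OF v z(1) z(2)])
  have L: "kphi s z \<le> kphi s x + 3/2 * real (dist_conf x z)" by (rule kphi_lip[OF v x z(1)])
  have "real (dist_conf x z) + real (dist_conf z y) \<le> real (ccost x r y)"
    using z(3) by linarith
  then show ?thesis using E S L by linarith
qed

lemma ind:
  assumes "\<forall>s\<in>set_pmf D. valid s" "finite (set_pmf D)" "\<forall>t\<le>length \<rho>. card (xs t) = 2"
  shows "kexp_cost D \<rho> \<le> 3/2 * (\<Sum>t<length \<rho>. real (ccost (xs t) (\<rho> ! t) (xs (Suc t))))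
           + measure_pmf.expectation D (\<lambda>s. kphi s (xs 0))"
  using assms
proof (induction \<rho> arbitrary: D xs)
  case Nil
  have "0 \<le> measure_pmf.expectation D (\<lambda>s. kphi s (xs 0))"
    by (rule integral_nonneg_AE) (simp add: kphi_nonneg)
  then show ?case by simp
next
  case (Cons r rs)
  define D' where "D' = bind_pmf D (\<lambda>s. ktrans s r)"
  have finD: "finite (set_pmf D)" using Cons.prems(2) .
  have vD: "\<And>s. s \<in> set_pmf D \<Longrightarrow> valid s" using Cons.prems(1) by blast
  have v': "\<forall>s\<in>set_pmf D'. valid s"
  proof
    fix s' assume "s' \<in> set_pmf D'"
    then obtain s where s1: "s \<in> set_pmf D" and s2: "s' \<in> set_pmf (ktrans s r)"
      by (auto simp: D'_def set_bind_pmf)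
    show "valid s'" by (rule ktrans_valid[OF vD[OF s1] s2])
  qed
  have f': "finite (set_pmf D')" unfolding D'_def set_bind_pmf
    by (rule finite_UN_I[OF finD ktrans_fin[OF vD]])
  have c': "\<forall>t\<le>length rs. card (xs (Suc t)) = 2"
  proof (intro allI impI)
    fix t assume "t \<le> length rs"
    then have "Suc t \<le> length (r # rs)" by simp
    then show "card (xs (Suc t)) = 2" using Cons.prems(3) by blast
  qed
  have IH: "kexp_cost D' rs \<le> 3/2 * (\<Sum>t<length rs. real (ccost (xs (Suc t)) (rs ! t) (xs (Suc (Suc t)))))
           + measure_pmf.expectation D' (\<lambda>s. kphi s (xs (Suc 0)))"
    using Cons.IH[OF v' f' c'] by simp
  have ED': "measure_pmf.expectation D' (\<lambda>s. kphi s (xs (Suc 0)))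
      = measure_pmf.expectation D (\<lambda>s. measure_pmf.expectation (ktrans s r) (\<lambda>s'. kphi s' (xs (Suc 0))))"
    unfolding D'_def by (rule integral_bind_fin[OF finD ktrans_fin[OF vD] kphi_nonneg])
  have x0: "card (xs 0) = 2" using Cons.prems(3)[rule_format, of 0] by simp
  have x1: "card (xs (Suc 0)) = 2" using Cons.prems(3)[rule_format, of "Suc 0"] by simp
  have "measure_pmf.expectation D (\<lambda>s. kstep_cost s r) + measure_pmf.expectation D' (\<lambda>s. kphi s (xs (Suc 0)))
      = measure_pmf.expectation D (\<lambda>s. kstep_cost s r + measure_pmf.expectation (ktrans s r) (\<lambda>s'. kphi s' (xs (Suc 0))))"
    unfolding ED' by (subst Bochner_Integration.integral_add) (auto intro: integrable_measure_pmf_finite[OF finD])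
  also have "\<dots> \<le> measure_pmf.expectation D (\<lambda>s. kphi s (xs 0) + 3/2 * real (ccost (xs 0) r (xs (Suc 0))))"
    by (rule exp_mono_fin[OF finD]) (rule amortized[OF vD x0 x1])
  also have "\<dots> = measure_pmf.expectation D (\<lambda>s. kphi s (xs 0)) + 3/2 * real (ccost (xs 0) r (xs (Suc 0)))"
    by (subst Bochner_Integration.integral_add) (auto intro: integrable_measure_pmf_finite[OF finD])
  finally have step: "measure_pmf.expectation D (\<lambda>s. kstep_cost s r) + measure_pmf.expectation D' (\<lambda>s. kphi s (xs (Suc 0)))
      \<le> measure_pmf.expectation D (\<lambda>s. kphi s (xs 0)) + 3/2 * real (ccost (xs 0) r (xs (Suc 0)))" .
  have sum: "(\<Sum>t<length (r # rs). real (ccost (xs t) ((r # rs) ! t) (xs (Suc t))))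
     = real (ccost (xs 0) r (xs (Suc 0))) + (\<Sum>t<length rs. real (ccost (xs (Suc t)) (rs ! t) (xs (Suc (Suc t)))))"
    by (simp only: length_Cons sum.lessThan_Suc_shift nth_Cons_0 nth_Cons_Suc)
  have k: "kexp_cost D (r # rs) = measure_pmf.expectation D (\<lambda>s. kstep_cost s r) + kexp_cost D' rs"
    by (simp add: D'_def)
  show ?case unfolding k sum distrib_left using IH step by linarith
qed

theorem mainTheorem10:
  fixes s0 :: "'p set"
  assumes "infinite (UNIV :: 'p set)"
    and "card s0 = 2"
  shows "\<exists>K::real. \<forall>\<rho> :: 'p list.
           kexp_cost (return_pmf (KA s0)) \<rho> \<le> 3 / 2 * real (cost_opt s0 \<rho>) + K"
proof (intro exI allI)
  fix \<rho> :: "'p list"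
  let ?S = "{(\<Sum>t<length \<rho>. ccost (xs t) (\<rho> ! t) (xs (Suc t))) | xs.
        xs 0 = s0 \<and> (\<forall>t\<in>{1..length \<rho>}. card (xs t) = 2)}"
  have mem: "(\<Sum>t<length \<rho>. ccost ((\<lambda>_::nat. s0) t) (\<rho> ! t) ((\<lambda>_::nat. s0) (Suc t))) \<in> ?S"
    unfolding mem_Collect_eq by (rule exI[of _ "\<lambda>_. s0"]) (use assms(2) in simp)
  then have ne: "?S \<noteq> {}" by (metis empty_iff)
  have "Inf ?S \<in> ?S" by (rule Inf_nat_def1[OF ne])
  then have h0: "\<exists>xs. Inf ?S = (\<Sum>t<length \<rho>. ccost (xs t) (\<rho> ! t) (xs (Suc t))) \<and>
        xs 0 = s0 \<and> (\<forall>t\<in>{1..length \<rho>}. card (xs t) = 2)"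
    unfolding mem_Collect_eq .
  define xs where "xs = (SOME xs. Inf ?S = (\<Sum>t<length \<rho>. ccost (xs t) (\<rho> ! t) (xs (Suc t))) \<and>
        xs 0 = s0 \<and> (\<forall>t\<in>{1..length \<rho>}. card (xs t) = 2))"
  have h: "Inf ?S = (\<Sum>t<length \<rho>. ccost (xs t) (\<rho> ! t) (xs (Suc t))) \<and>
        xs 0 = s0 \<and> (\<forall>t\<in>{1..length \<rho>}. card (xs t) = 2)"
    unfolding xs_def by (rule someI_ex[OF h0])
  note co0 = h[THEN conjunct1]
  note xs = h[THEN conjunct2, THEN conjunct1] h[THEN conjunct2, THEN conjunct2]
  have co: "cost_opt s0 \<rho> = (\<Sum>t<length \<rho>. ccost (xs t) (\<rho> ! t) (xs (Suc t)))"
    unfolding cost_opt_def by (rule co0)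
  have c: "\<forall>t\<le>length \<rho>. card (xs t) = 2"
  proof (intro allI impI)
    fix t assume t: "t \<le> length \<rho>"
    show "card (xs t) = 2"
    proof (cases "t = 0")
      case True
      show ?thesis unfolding True xs(1) by (rule assms(2))
    next
      case False
      then have "t \<in> {1..length \<rho>}" using t by simp
      then show ?thesis by (rule xs(2)[rule_format])
    qed
  qed
  have v: "\<forall>s\<in>set_pmf (return_pmf (KA s0)). valid s" using assms(2) by simp
  have f: "finite (set_pmf (return_pmf (KA s0)))" by simp
  have I: "kexp_cost (return_pmf (KA s0)) \<rho> \<le> 3/2 * (\<Sum>t<length \<rho>. real (ccost (xs t) (\<rho> ! t) (xs (Suc t))))
           + measure_pmf.expectation (return_pmf (KA s0)) (\<lambda>s. kphi s (xs 0))"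
    by (rule ind[OF v f c])
  have E: "measure_pmf.expectation (return_pmf (KA s0)) (\<lambda>s. kphi s (xs 0)) \<le> 0"
    by (rule exp_le_const[OF f]) (simp add: xs(1))
  have R: "real (cost_opt s0 \<rho>) = (\<Sum>t<length \<rho>. real (ccost (xs t) (\<rho> ! t) (xs (Suc t))))"
    unfolding co by (rule of_nat_sum)
  show "kexp_cost (return_pmf (KA s0)) \<rho> \<le> 3 / 2 * real (cost_opt s0 \<rho>) + 0"
    unfolding R using I E by linarith
qed

end
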